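(* Let $F:\mathcal{P}(V,A)\to S_2(A)$ be a weakly viable, reducible consular election rule satisfying SPP and SPO. Then $F$ is Marian if and only if its range graph $\mathcal{G}(F)$ is acyclic.
   Context: $V$ is a finite nonempty set of voters, $A$ a finite set of alternatives; a profile $P$ assigns to each voter $i$ a linear order $P_i$ on $A$; $P_i'P_{-i}$ replaces voter $i$'s order by $P_i'$; $P|_B$ is the profile of restrictions to $B\subseteq A$. $S_2(A)$ is the set of 2-element subsets of $A$; a consular election rule is a map $F:\mathcal{P}(V,A)\to S_2(A)$. SPO: for all $P$, $i$, $P_i'$, $\mathrm{best}(P_i,F(P))\succeq_i\mathrm{best}(P_i,F(P_i'P_{-i}))$; SPP: same with $\mathrm{worst}$, where $\mathrm{best}(P_i,W)$, $\mathrm{worst}(P_i,W)$ are the $P_i$-best and $P_i$-worst elements of $W$. Weakly viable: every $a\in A$ lies in $F(P)$ for some $P$. $F$ is reducible if there is a partition $A=B\uplus C$ and social choice functions $G:\mathcal{P}(V,B)\to B$, $H:\mathcal{P}(V,C)\to C$ with $F(P)=\{G(P|_B),H(P|_C)\}$ for all $P$. $F$ is Marian if some $m\in A$ lies in $F(P)$ for every profile $P$. The range graph $\mathcal{G}(F)$ has vertex set $A$ and edge set equal to the range of $F$. *)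

theory Defs
  imports Main
begin

text \<open>Preferences: a voter's order is a relation r with (x,y) \<in> r meaning
  x is ranked at least as high as y (x weakly preferred to y).\<close>

definition profiles :: "'v set \<Rightarrow> 'a set \<Rightarrow> ('v \<Rightarrow> 'a rel) set" where
  "profiles V A = {P. (\<forall>i\<in>V. linear_order_on A (P i)) \<and> (\<forall>i. i \<notin> V \<longrightarrow> P i = {})}"

definition restrict_profile :: "('v \<Rightarrow> 'a rel) \<Rightarrow> 'a set \<Rightarrow> ('v \<Rightarrow> 'a rel)" where
  "restrict_profile P B = (\<lambda>i. P i \<inter> (B \<times> B))"

definition S2 :: "'a set \<Rightarrow> 'a set set" where
  "S2 A = {W. W \<subseteq> A \<and> card W = 2}"

definition consular_rule :: "'v set \<Rightarrow> 'a set \<Rightarrow> (('v \<Rightarrow> 'a rel) \<Rightarrow> 'a set) \<Rightarrow> bool" where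
  "consular_rule V A F \<longleftrightarrow> (\<forall>P\<in>profiles V A. F P \<in> S2 A)"

definition best :: "'a rel \<Rightarrow> 'a set \<Rightarrow> 'a" where
  "best r W = (THE w. w \<in> W \<and> (\<forall>x\<in>W. (w, x) \<in> r))"

definition worst :: "'a rel \<Rightarrow> 'a set \<Rightarrow> 'a" where
  "worst r W = (THE w. w \<in> W \<and> (\<forall>x\<in>W. (x, w) \<in> r))"

definition SPO :: "'v set \<Rightarrow> 'a set \<Rightarrow> (('v \<Rightarrow> 'a rel) \<Rightarrow> 'a set) \<Rightarrow> bool" where
  "SPO V A F \<longleftrightarrow> (\<forall>P\<in>profiles V A. \<forall>i\<in>V. \<forall>Q. linear_order_on A Q \<longrightarrow>
      (best (P i) (F P), best (P i) (F (P(i := Q)))) \<in> P i)"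

definition SPP :: "'v set \<Rightarrow> 'a set \<Rightarrow> (('v \<Rightarrow> 'a rel) \<Rightarrow> 'a set) \<Rightarrow> bool" where
  "SPP V A F \<longleftrightarrow> (\<forall>P\<in>profiles V A. \<forall>i\<in>V. \<forall>Q. linear_order_on A Q \<longrightarrow>
      (worst (P i) (F P), worst (P i) (F (P(i := Q)))) \<in> P i)"

definition weakly_viable :: "'v set \<Rightarrow> 'a set \<Rightarrow> (('v \<Rightarrow> 'a rel) \<Rightarrow> 'a set) \<Rightarrow> bool" where
  "weakly_viable V A F \<longleftrightarrow> (\<forall>a\<in>A. \<exists>P\<in>profiles V A. a \<in> F P)"

definition reducible :: "'v set \<Rightarrow> 'a set \<Rightarrow> (('v \<Rightarrow> 'a rel) \<Rightarrow> 'a set) \<Rightarrow> bool" where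
  "reducible V A F \<longleftrightarrow> (\<exists>B C G H. B \<union> C = A \<and> B \<inter> C = {} \<and>
      (\<forall>Q\<in>profiles V B. G Q \<in> B) \<and> (\<forall>Q\<in>profiles V C. H Q \<in> C) \<and>
      (\<forall>P\<in>profiles V A. F P = {G (restrict_profile P B), H (restrict_profile P C)}))"

definition marian :: "'v set \<Rightarrow> 'a set \<Rightarrow> (('v \<Rightarrow> 'a rel) \<Rightarrow> 'a set) \<Rightarrow> bool" where
  "marian V A F \<longleftrightarrow> (\<exists>m\<in>A. \<forall>P\<in>profiles V A. m \<in> F P)"

definition range_graph_edges :: "'v set \<Rightarrow> 'a set \<Rightarrow> (('v \<Rightarrow> 'a rel) \<Rightarrow> 'a set) \<Rightarrow> 'a set set" where
  "range_graph_edges V A F = F ` profiles V A"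

definition ugraph_acyclic :: "'a set \<Rightarrow> 'a set set \<Rightarrow> bool" where
  "ugraph_acyclic Vs E \<longleftrightarrow> \<not> (\<exists>vs. length vs \<ge> 3 \<and> distinct vs \<and> set vs \<subseteq> Vs \<and>
      (\<forall>j < length vs. {vs ! j, vs ! ((j + 1) mod length vs)} \<in> E))"

end

theory Submission
  imports Defs
begin

lemma lin_restr:
  assumes "linear_order_on A r" "B \<subseteq> A"
  shows "linear_order_on B (r \<inter> B \<times> B)"
proof -
  have r: "refl_on A r" "trans r" "antisym r" "total_on A r"
    using assms(1) unfolding linear_order_on_def partial_order_on_def preorder_on_def by auto
  have "refl_on B (r \<inter> B \<times> B)" using r(1) assms(2) unfolding refl_on_def by auto
  moreover have "trans (r \<inter> B \<times> B)" using r(2) unfolding trans_def by auto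
  moreover have "antisym (r \<inter> B \<times> B)" using r(3) unfolding antisym_def by auto
  moreover have "total_on B (r \<inter> B \<times> B)" using r(4) assms(2) unfolding total_on_def by auto
  ultimately show ?thesis unfolding linear_order_on_def partial_order_on_def preorder_on_def by auto
qed

lemma restr_prof:
  assumes "P \<in> profiles V A" "B \<subseteq> A"
  shows "restrict_profile P B \<in> profiles V B"
  using assms unfolding profiles_def restrict_profile_def by (auto intro: lin_restr)

lemma lin_comb:
  assumes "linear_order_on B r" "linear_order_on C s" "B \<inter> C = {}"
  shows "linear_order_on (B \<union> C) (r \<union> s \<union> B \<times> C)"
proof -
  have r: "refl_on B r" "trans r" "antisym r" "total_on B r" "r \<subseteq> B \<times> B"
    using assms(1) unfolding linear_order_on_def partial_order_on_def preorder_on_def by auto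
  have s: "refl_on C s" "trans s" "antisym s" "total_on C s" "s \<subseteq> C \<times> C"
    using assms(2) unfolding linear_order_on_def partial_order_on_def preorder_on_def by auto
  let ?R = "r \<union> s \<union> B \<times> C"
  have "?R \<subseteq> (B \<union> C) \<times> (B \<union> C)" using r(5) s(5) by auto
  moreover have "refl_on (B \<union> C) ?R" using r(1) s(1) unfolding refl_on_def by auto
  moreover have "trans ?R"
  proof (rule transI)
    fix x y z assume xy: "(x, y) \<in> ?R" and yz: "(y, z) \<in> ?R"
    show "(x, z) \<in> ?R"
    proof (cases "(x, y) \<in> r")
      case xr: True
      hence xB: "x \<in> B" "y \<in> B" using r(5) by auto
      hence "y \<notin> C" using assms(3) by auto
      hence "(y, z) \<in> r \<or> (y, z) \<in> B \<times> C" using yz s(5) by auto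
      thus ?thesis using xr r(2) xB unfolding trans_def by blast
    next
      case xnr: False
      show ?thesis
      proof (cases "(x, y) \<in> s")
        case xs: True
        hence xC: "x \<in> C" "y \<in> C" using s(5) by auto
        hence "y \<notin> B" using assms(3) by auto
        hence "(y, z) \<in> s" using yz r(5) by auto
        thus ?thesis using xs s(2) unfolding trans_def by blast
      next
        case False
        hence "x \<in> B" "y \<in> C" using xy xnr by auto
        hence "y \<notin> B" using assms(3) by auto
        hence "(y, z) \<in> s" using yz r(5) by auto
        hence "z \<in> C" using s(5) by auto
        thus ?thesis using \<open>x \<in> B\<close> by auto
      qed
    qed
  qed
  moreover have "antisym ?R"
  proof (rule antisymI)
    fix x y assume xy: "(x, y) \<in> ?R" and yx: "(y, x) \<in> ?R"
    have "x \<in> B \<and> y \<in> B \<or> x \<in> C \<and> y \<in> C"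
    proof (rule ccontr)
      assume h: "\<not> (x \<in> B \<and> y \<in> B \<or> x \<in> C \<and> y \<in> C)"
      have "x \<in> B \<and> y \<in> C" using xy h r(5) s(5) by auto
      moreover have "y \<in> B \<and> x \<in> C" using yx h r(5) s(5) by auto
      ultimately show False using assms(3) by auto
    qed
    thus "x = y"
    proof
      assume "x \<in> B \<and> y \<in> B"
      hence "(x, y) \<in> r" "(y, x) \<in> r" using xy yx s(5) assms(3) by auto
      thus ?thesis using r(3) unfolding antisym_def by blast
    next
      assume "x \<in> C \<and> y \<in> C"
      hence "(x, y) \<in> s" "(y, x) \<in> s" using xy yx r(5) assms(3) by auto
      thus ?thesis using s(3) unfolding antisym_def by blast
    qed
  qed
  moreover have "total_on (B \<union> C) ?R"
    using r(4) s(4) unfolding total_on_def by auto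
  ultimately show ?thesis unfolding linear_order_on_def partial_order_on_def preorder_on_def by auto
qed

lemma comb_prof:
  assumes "Q1 \<in> profiles V B" "Q2 \<in> profiles V C" "B \<inter> C = {}"
  defines "P \<equiv> (\<lambda>i. if i \<in> V then Q1 i \<union> Q2 i \<union> B \<times> C else {})"
  shows "P \<in> profiles V (B \<union> C)" "restrict_profile P B = Q1" "restrict_profile P C = Q2"
proof -
  show "P \<in> profiles V (B \<union> C)" using assms unfolding profiles_def P_def by (auto intro!: lin_comb)
  have s1: "Q1 i \<subseteq> B \<times> B \<and> Q2 i \<subseteq> C \<times> C" for i
  proof (cases "i \<in> V")
    case True
    hence "linear_order_on B (Q1 i)" "linear_order_on C (Q2 i)" using assms(1,2) unfolding profiles_def by auto
    thus ?thesis unfolding linear_order_on_def using partial_order_onD(4) by blast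
  next
    case False thus ?thesis using assms(1,2) unfolding profiles_def by auto
  qed
  show "restrict_profile P B = Q1"
  proof
    fix i
    show "restrict_profile P B i = Q1 i"
    proof (cases "i \<in> V")
      case True
      hence Pi: "P i = Q1 i \<union> Q2 i \<union> B \<times> C" unfolding P_def by simp
      have "(Q1 i \<union> Q2 i \<union> B \<times> C) \<inter> B \<times> B = Q1 i"
        using s1[of i] assms(3) by auto
      thus ?thesis unfolding restrict_profile_def Pi .
    next
      case False thus ?thesis using assms(1) unfolding restrict_profile_def P_def profiles_def by simp
    qed
  qed
  show "restrict_profile P C = Q2"
  proof
    fix i
    show "restrict_profile P C i = Q2 i"
    proof (cases "i \<in> V")
      case True
      hence Pi: "P i = Q1 i \<union> Q2 i \<union> B \<times> C" unfolding P_def by simp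
      have "(Q1 i \<union> Q2 i \<union> B \<times> C) \<inter> C \<times> C = Q2 i"
        using s1[of i] assms(3) by auto
      thus ?thesis unfolding restrict_profile_def Pi .
    next
      case False thus ?thesis using assms(2) unfolding restrict_profile_def P_def profiles_def by simp
    qed
  qed
qed

lemma marian_acyclic:
  assumes "marian V A F"
  shows "ugraph_acyclic A (range_graph_edges V A F)"
proof -
  obtain m where m: "\<forall>P\<in>profiles V A. m \<in> F P" using assms unfolding marian_def by blast
  have edge: "\<And>e. e \<in> range_graph_edges V A F \<Longrightarrow> m \<in> e"
    using m unfolding range_graph_edges_def by auto
  show ?thesis unfolding ugraph_acyclic_def
  proof
    assume "\<exists>vs. length vs \<ge> 3 \<and> distinct vs \<and> set vs \<subseteq> A \<and>
      (\<forall>j < length vs. {vs ! j, vs ! ((j + 1) mod length vs)} \<in> range_graph_edges V A F)"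
    then obtain vs where l: "length vs \<ge> 3" and d: "distinct vs"
      and e: "\<forall>j < length vs. {vs ! j, vs ! ((j + 1) mod length vs)} \<in> range_graph_edges V A F" by blast
    define n where "n = length vs"
    have e2: "\<forall>j<n. vs ! j = m \<or> vs ! ((j + 1) mod n) = m"
    proof (intro allI impI)
      fix j assume "j < n"
      hence "{vs ! j, vs ! ((j + 1) mod n)} \<in> range_graph_edges V A F" using e unfolding n_def by blast
      hence "m \<in> {vs ! j, vs ! ((j + 1) mod n)}" by (rule edge)
      thus "vs ! j = m \<or> vs ! ((j + 1) mod n) = m" by blast
    qed
    have uniq: "j = k" if "j < n" "k < n" "vs ! j = m" "vs ! k = m" for j k
    proof -
      have "vs ! j = vs ! k" using that by simp
      thus ?thesis using nth_eq_iff_index_eq[OF d, of j k] that unfolding n_def by blast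
    qed
    show False
    proof (cases "\<exists>k<n. vs ! k = m")
      case True
      then obtain k where k: "k < n" "vs ! k = m" by blast
      define j where "j = (k + 1) mod n"
      have n3: "n \<ge> 3" using l unfolding n_def .
      have jn: "j < n" unfolding j_def using n3 by simp
      have jk: "j \<noteq> k"
      proof (cases "k + 1 < n")
        case True thus ?thesis unfolding j_def by simp
      next
        case False hence "k + 1 = n" using k by simp
        thus ?thesis unfolding j_def using n3 by simp
      qed
      have j1k: "(j + 1) mod n \<noteq> k"
      proof (cases "k + 1 < n")
        case True
        hence j: "j = k + 1" unfolding j_def by simp
        show ?thesis
        proof (cases "k + 2 < n")
          case True thus ?thesis using j by simp
        next
          case False hence "k + 2 = n" using True by simp
          thus ?thesis using j n3 by simp
        qed
      next
        case False hence "k + 1 = n" using k by simp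
        hence "j = 0" unfolding j_def by simp
        thus ?thesis using n3 \<open>k + 1 = n\<close> by simp
      qed
      have j1n: "(j + 1) mod n < n" using n3 by simp
      from e2 jn have "vs ! j = m \<or> vs ! ((j + 1) mod n) = m" by blast
      thus False
      proof
        assume "vs ! j = m" thus False using uniq[OF jn k(1) _ k(2)] jk by blast
      next
        assume "vs ! ((j + 1) mod n) = m" thus False using uniq[OF j1n k(1) _ k(2)] j1k by blast
      qed
    next
      case False
      have "0 < n" using l unfolding n_def by linarith
      hence "vs ! 0 = m \<or> vs ! ((0 + 1) mod n) = m" using e2 by blast
      moreover have "(0 + 1) mod n < n" using \<open>0 < n\<close> by simp
      ultimately show ?thesis using False \<open>0 < n\<close> by blast
    qed
  qed
qed

theorem corollary30:
  fixes V :: "'v set" and A :: "'a set" and F :: "('v \<Rightarrow> 'a rel) \<Rightarrow> 'a set"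
  assumes "finite V" and "V \<noteq> {}" and "finite A"
    and "consular_rule V A F"
    and "weakly_viable V A F" and "reducible V A F"
    and "SPP V A F" and "SPO V A F"
  shows "marian V A F \<longleftrightarrow> ugraph_acyclic A (range_graph_edges V A F)"
proof
  assume "marian V A F" thus "ugraph_acyclic A (range_graph_edges V A F)" by (rule marian_acyclic)
next
  assume ac: "ugraph_acyclic A (range_graph_edges V A F)"
  show "marian V A F"
  proof (rule ccontr)
    assume nm: "\<not> marian V A F"
    obtain B C G H where BC: "B \<union> C = A" "B \<inter> C = {}"
      and G: "\<forall>Q\<in>profiles V B. G Q \<in> B" and H: "\<forall>Q\<in>profiles V C. H Q \<in> C"
      and FP: "\<forall>P\<in>profiles V A. F P = {G (restrict_profile P B), H (restrict_profile P C)}"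
      using assms(6) unfolding reducible_def by blast
    obtain P0 where P0: "P0 \<in> profiles V A"
    proof (cases "A = {}")
      case True
      have "(\<lambda>i. {}) \<in> profiles V A" using True unfolding profiles_def by simp
      thus ?thesis using that by blast
    next
      case False
      thus ?thesis using that assms(5) unfolding weakly_viable_def by blast
    qed
    have BA: "B \<subseteq> A" "C \<subseteq> A" using BC by auto
    have Bne: "B \<noteq> {}" using G restr_prof[OF P0 BA(1)] by blast
    have Cne: "C \<noteq> {}" using H restr_prof[OF P0 BA(2)] by blast
    have notsingle: "\<not> (\<exists>x. X = {x})" if X: "X = B \<or> X = C" for X
    proof
      assume "\<exists>x. X = {x}"
      then obtain x where x: "X = {x}" by blast
      have "x \<in> F P" if P: "P \<in> profiles V A" for P
      proof -
        have "G (restrict_profile P B) \<in> B" using G restr_prof[OF P BA(1)] by blast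
        moreover have "H (restrict_profile P C) \<in> C" using H restr_prof[OF P BA(2)] by blast
        ultimately show ?thesis using X x FP P by auto
      qed
      moreover have "x \<in> A" using X x BC by auto
      ultimately show False using nm unfolding marian_def by blast
    qed
    obtain b1 b2 where b: "b1 \<in> B" "b2 \<in> B" "b1 \<noteq> b2"
      using Bne notsingle[of B] by blast
    obtain c1 c2 where c: "c1 \<in> C" "c2 \<in> C" "c1 \<noteq> c2"
      using Cne notsingle[of C] by blast
    have gsurj: "\<exists>Q\<in>profiles V B. G Q = b" if "b \<in> B" for b
    proof -
      have bA: "b \<in> A" using that BA(1) by blast
      obtain P where P: "P \<in> profiles V A" "b \<in> F P" using assms(5) bA unfolding weakly_viable_def by blast
      have hC: "H (restrict_profile P C) \<in> C" using H restr_prof[OF P(1) BA(2)] by blast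
      have "b \<notin> C" using that BC(2) by blast
      hence "b \<noteq> H (restrict_profile P C)" using hC by metis
      moreover have "b \<in> {G (restrict_profile P B), H (restrict_profile P C)}" using FP P by blast
      ultimately have "G (restrict_profile P B) = b" by blast
      thus ?thesis using restr_prof[OF P(1) BA(1)] by blast
    qed
    have hsurj: "\<exists>Q\<in>profiles V C. H Q = c" if "c \<in> C" for c
    proof -
      have cA: "c \<in> A" using that BA(2) by blast
      obtain P where P: "P \<in> profiles V A" "c \<in> F P" using assms(5) cA unfolding weakly_viable_def by blast
      have gB: "G (restrict_profile P B) \<in> B" using G restr_prof[OF P(1) BA(1)] by blast
      have "c \<notin> B" using that BC(2) by blast
      hence "c \<noteq> G (restrict_profile P B)" using gB by metis
      moreover have "c \<in> {G (restrict_profile P B), H (restrict_profile P C)}" using FP P by blast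
      ultimately have "H (restrict_profile P C) = c" by blast
      thus ?thesis using restr_prof[OF P(1) BA(2)] by blast
    qed
    have edge: "{b, c} \<in> range_graph_edges V A F" if bc: "b \<in> B" "c \<in> C" for b c
    proof -
      obtain Q1 where Q1: "Q1 \<in> profiles V B" "G Q1 = b" using gsurj bc(1) by blast
      obtain Q2 where Q2: "Q2 \<in> profiles V C" "H Q2 = c" using hsurj bc(2) by blast
      note cp = comb_prof[OF Q1(1) Q2(1) BC(2)]
      define P where "P = (\<lambda>i. if i \<in> V then Q1 i \<union> Q2 i \<union> B \<times> C else {})"
      have PA: "P \<in> profiles V A" using cp(1) BC(1) unfolding P_def by simp
      have "F P = {G (restrict_profile P B), H (restrict_profile P C)}" using FP PA by blast
      hence "F P = {b, c}" using cp(2,3) Q1(2) Q2(2) unfolding P_def by simp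
      thus ?thesis using PA unfolding range_graph_edges_def by (metis image_eqI)
    qed
    define vs where "vs = [b1, c1, b2, c2]"
    have e1: "{b1, c1} \<in> range_graph_edges V A F" using edge b(1) c(1) .
    have e2: "{b2, c1} \<in> range_graph_edges V A F" using edge b(2) c(1) .
    have e3: "{b2, c2} \<in> range_graph_edges V A F" using edge b(2) c(2) .
    have e4: "{b1, c2} \<in> range_graph_edges V A F" using edge b(1) c(2) .
    have bnc: "b1 \<noteq> c1" "b1 \<noteq> c2" "b2 \<noteq> c1" "b2 \<noteq> c2" using b c BC(2) by blast+
    have "length vs \<ge> 3" unfolding vs_def by simp
    moreover have "distinct vs" unfolding vs_def using b(3) c(3) bnc by auto
    moreover have "set vs \<subseteq> A" using b c BC(1) unfolding vs_def by auto
    moreover have "\<forall>j < length vs. {vs ! j, vs ! ((j + 1) mod length vs)} \<in> range_graph_edges V A F"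
    proof (intro allI impI)
      fix j assume "j < length vs"
      hence "j = 0 \<or> j = 1 \<or> j = 2 \<or> j = 3" unfolding vs_def by auto
      thus "{vs ! j, vs ! ((j + 1) mod length vs)} \<in> range_graph_edges V A F"
      proof (elim disjE)
        assume "j = 0" thus ?thesis using e1 unfolding vs_def by simp
      next
        assume "j = 1" thus ?thesis using e2 unfolding vs_def by (simp add: insert_commute)
      next
        assume "j = 2" thus ?thesis using e3 unfolding vs_def by simp
      next
        assume "j = 3" thus ?thesis using e4 unfolding vs_def by (simp add: insert_commute)
      qed
    qed
    ultimately have "\<exists>vs. length vs \<ge> 3 \<and> distinct vs \<and> set vs \<subseteq> A \<and>
      (\<forall>j < length vs. {vs ! j, vs ! ((j + 1) mod length vs)} \<in> range_graph_edges V A F)" by blast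
    thus False using ac unfolding ugraph_acyclic_def by blast
  qed
qed

end
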